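(* Let $n\ge1$, $\mathbf{k}=(k_1,\dots,k_n)$ positive integers, $D\in\mathcal{D}_{\mathbf{k}}$, and $R=R(D)$. Then the directed multigraph $G_R$ is balanced: every vertex $a$ of $G_R$ has in-degree equal to its out-degree, and both equal $|S(a)|$.
   Context: $|\mathbf{k}|=k_1+\cdots+k_n$, $N=n+|\mathbf{k}|$. $\mathcal{D}_{\mathbf{k}}$: sequences $(a_1,\dots,a_N)$ whose positive entries are $k_1,\dots,k_n$ in order, other entries $-1$, all partial sums $a_1+\cdots+a_{i-1}\ge0$. SW-word: $S^{k_j}$ for up step $k_j$, $W$ for $-1$. Filling Algorithm producing $T(D)$: $n$ columns, column $i$ with $k_i+1$ cells in rows $1,\dots,k_i+1$; place $1$ at top of column 1; having placed $1,\dots,i-1$, the lowest filled entry of column $j$ is active if not in row $k_j+1$; if the $i$-th letter is $W$ place $i$ below the smallest active entry, otherwise at the top of the leftmost empty column; continue until $1,\dots,N$ placed. Entries of $T(D)$ are indices; $t_i$ is the top index of column $i$. Ranking Algorithm producing $R(D)$: ranks $0,\dots,k_1$ to column-1 indices top to bottom; for $i=2,\dots,n$, if index $t_i-1$ has rank $a$, column $i$ gets ranks $a,\dots,a+k_i$ top to bottom. $G_R$ is the directed multigraph whose vertices are the ranks appearing in $R$, with one directed edge for each index of $T(D)$: if the index is $t_i$ with rank $a$, the edge is $a\to a+k_i$; if the index is not in row 1 and has rank $b$, the edge is $b\to b-1$. $S(a)$ is the set of indices with rank $a$. *)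

theory Defs
  imports "HOL-Library.Multiset"
begin

definition Dk :: "nat list \<Rightarrow> int list set" where
  "Dk k = {a. length a = length k + sum_list k
             \<and> filter (\<lambda>x. x > 0) a = map int k
             \<and> (\<forall>x\<in>set a. x > 0 \<or> x = -1)
             \<and> (\<forall>i < length a. sum_list (take i a) \<ge> 0)}"

text \<open>The state is the list of the n columns (0-based column numbers),
  each given as the list of its entries (indices) from top to bottom; column j has
  k!j + 1 cells. Index i with letter x (x > 0 means S, x = -1 means W) is placed:
  for S at the top of the leftmost empty column, for W directly below the smallest
  active entry, where the lowest filled entry of a nonempty column j is active iff
  it is not in row k_j + 1, i.e. the column has fewer than k_j + 1 entries.\<close>
definition active_cols :: "nat list \<Rightarrow> nat list list \<Rightarrow> nat set" where
  "active_cols k cols = {j. j < length cols \<and> cols ! j \<noteq> [] \<and> length (cols ! j) < k ! j + 1}"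

definition fill_step :: "nat list \<Rightarrow> nat list list \<Rightarrow> nat \<times> int \<Rightarrow> nat list list" where
  "fill_step k cols ix =
     (let i = fst ix; x = snd ix in
      if x > 0 then
        (let j = (LEAST j. j < length cols \<and> cols ! j = []) in cols[j := [i]])
      else
        (let j = (ARG_MIN (\<lambda>j. last (cols ! j)) j. j \<in> active_cols k cols)
         in cols[j := cols ! j @ [i]]))"

definition fillT :: "nat list \<Rightarrow> int list \<Rightarrow> nat list list" where
  "fillT k D = foldl (fill_step k) (replicate (length k) []) (zip [1..<length D + 1] D)"

text \<open>Column (0-based) and row (0-based, row 0 = row 1 of the paper) of an index.\<close>
definition col_of :: "nat list list \<Rightarrow> nat \<Rightarrow> nat" where
  "col_of T x = (LEAST j. j < length T \<and> x \<in> set (T ! j))"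

definition row_of :: "nat list list \<Rightarrow> nat \<Rightarrow> nat" where
  "row_of T x = (LEAST r. r < length (T ! col_of T x) \<and> T ! col_of T x ! r = x)"

definition top_idx :: "nat list list \<Rightarrow> nat \<Rightarrow> nat" where
  "top_idx T j = hd (T ! j)"

text \<open>Ranking Algorithm: st!j is the rank of the top of column j; the entry in row r
  (0-based) of column j gets rank st!j + r.\<close>
definition rank_in :: "nat list list \<Rightarrow> nat list \<Rightarrow> nat \<Rightarrow> nat" where
  "rank_in T st x = st ! col_of T x + row_of T x"

fun starts :: "nat list list \<Rightarrow> nat \<Rightarrow> nat list" where
  "starts T 0 = [0]"
| "starts T (Suc j) = (let st = starts T j in st @ [rank_in T st (top_idx T (Suc j) - 1)])"

definition rankR :: "nat list \<Rightarrow> int list \<Rightarrow> nat \<Rightarrow> nat" where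
  "rankR k D x = (let T = fillT k D in rank_in T (starts T (length k - 1)) x)"

definition GR_vertices :: "nat list \<Rightarrow> int list \<Rightarrow> nat set" where
  "GR_vertices k D = rankR k D ` {1..length D}"

definition GR_edge :: "nat list \<Rightarrow> int list \<Rightarrow> nat \<Rightarrow> nat \<times> nat" where
  "GR_edge k D x = (let T = fillT k D; a = rankR k D x in
     if row_of T x = 0 then (a, a + k ! col_of T x) else (a, a - 1))"

definition GR_edges :: "nat list \<Rightarrow> int list \<Rightarrow> (nat \<times> nat) multiset" where
  "GR_edges k D = mset (map (GR_edge k D) [1..<length D + 1])"

definition out_deg :: "(nat \<times> nat) multiset \<Rightarrow> nat \<Rightarrow> nat" where
  "out_deg E a = size (filter_mset (\<lambda>e. fst e = a) E)"

definition in_deg :: "(nat \<times> nat) multiset \<Rightarrow> nat \<Rightarrow> nat" where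
  "in_deg E a = size (filter_mset (\<lambda>e. snd e = a) E)"

definition S_rank :: "nat list \<Rightarrow> int list \<Rightarrow> nat \<Rightarrow> nat set" where
  "S_rank k D a = {x \<in> {1..length D}. rankR k D x = a}"

end

theory Submission
  imports Defs
begin


definition sS :: "int list \<Rightarrow> nat \<Rightarrow> nat" where
  "sS D i = length (filter (\<lambda>x. x > 0) (take i D))"

definition Inv :: "nat list \<Rightarrow> int list \<Rightarrow> nat \<Rightarrow> nat list list \<Rightarrow> bool" where
  "Inv k D i cols \<longleftrightarrow> length cols = length k
    \<and> (\<forall>j<length k. j < sS D i \<longrightarrow> cols!j \<noteq> [] \<and> length (cols!j) \<le> k!j+1)
    \<and> (\<forall>j<length k. sS D i \<le> j \<longrightarrow> cols!j = [])
    \<and> int (\<Sum>j<sS D i. k!j+1 - length (cols!j)) = sum_list (take i D)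
    \<and> (\<Sum>j<length k. mset (cols!j)) = mset [1..<i+1]"

lemma filt_split: "filter P (take m xs) @ filter P (drop m xs) = filter P xs"
  by (metis append_take_drop_id filter_append)

lemma Dk_sum0:
  assumes "D \<in> Dk k" shows "sum_list D = 0"
proof -
  have L: "length D = length k + sum_list k" and F: "filter (\<lambda>x. x > 0) D = map int k"
    and A: "\<forall>x\<in>set D. x > 0 \<or> x = -1" using assms by (auto simp: Dk_def)
  have "sum_list (filter (\<lambda>x. \<not> x > 0) D) = - int (length (filter (\<lambda>x. \<not> x > 0) D))"
    using A by (induction D) auto
  moreover have "length (filter (\<lambda>x. x > 0) D) + length (filter (\<lambda>x. \<not> x > 0) D) = length D"
    by (rule sum_length_filter_compl)
  moreover have "sum_list D = sum_list (filter (\<lambda>x. x > 0) D) + sum_list (filter (\<lambda>x. \<not> x > 0) D)"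
    by (induction D) auto
  moreover have "sum_list (map int k) = int (sum_list k)" by (induction k) auto
  ultimately show ?thesis using L F by simp
qed

lemma sS_le: "sS D i \<le> length (filter (\<lambda>x. x > 0) D)"
  unfolding sS_def by (metis filt_split length_append le_add1)

lemma step_inv:
  assumes D: "D \<in> Dk k" and i: "i < length D" and I: "Inv k D i cols"
  shows "Inv k D (Suc i) (fill_step k cols (i+1, D!i))"
proof -
  have L: "length D = length k + sum_list k" and F: "filter (\<lambda>x. x > 0) D = map int k"
    and A: "\<forall>x\<in>set D. x > 0 \<or> x = -1" and P: "\<forall>i < length D. sum_list (take i D) \<ge> 0"
    using D by (auto simp: Dk_def)
  let ?n = "length k"
  let ?s = "sS D i"
  have tk: "take (Suc i) D = take i D @ [D!i]" using i by (simp add: take_Suc_conv_app_nth)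
  have lc: "length cols = ?n" and b: "\<forall>j<?n. j < ?s \<longrightarrow> cols!j \<noteq> [] \<and> length (cols!j) \<le> k!j+1"
    and c: "\<forall>j<?n. ?s \<le> j \<longrightarrow> cols!j = []"
    and d: "int (\<Sum>j<?s. k!j+1 - length (cols!j)) = sum_list (take i D)"
    and e: "(\<Sum>j<?n. mset (cols!j)) = mset [1..<i+1]" using I by (auto simp: Inv_def)
  have ms: "mset [1..<Suc i+1] = mset [1..<i+1] + {#i+1#}" by simp
  have upd: "(\<Sum>j<?n. mset (cols[p := v]!j)) = (\<Sum>j<?n. mset (cols!j)) - mset (cols!p) + mset v"
    if "p < ?n" for p v
  proof -
    have "(\<Sum>j<?n. mset (cols[p := v]!j)) = mset (cols[p := v]!p) + (\<Sum>j\<in>{..<?n}-{p}. mset (cols[p := v]!j))"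
      using that by (meson finite_lessThan lessThan_iff sum.remove)
    also have "(\<Sum>j\<in>{..<?n}-{p}. mset (cols[p := v]!j)) = (\<Sum>j\<in>{..<?n}-{p}. mset (cols!j))"
      by (rule sum.cong) auto
    also have "(\<Sum>j<?n. mset (cols!j)) = mset (cols!p) + (\<Sum>j\<in>{..<?n}-{p}. mset (cols!j))"
      using that by (meson finite_lessThan lessThan_iff sum.remove)
    ultimately show ?thesis using that lc by simp
  qed
  show ?thesis
  proof (cases "D!i > 0")
    case True
    have sS1: "sS D (Suc i) = Suc ?s" using True tk by (simp add: sS_def)
    have "sS D (Suc i) \<le> ?n" using sS_le[of D "Suc i"] F by simp
    hence sn: "?s < ?n" using sS1 by simp
    have "filter (\<lambda>x. x > 0) (take (Suc i) D) = filter (\<lambda>x. x > 0) (take i D) @ [D!i]"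
      using tk True by simp
    hence "map int k = (filter (\<lambda>x. x > 0) (take i D) @ [D!i]) @ filter (\<lambda>x. x > 0) (drop (Suc i) D)"
      using filt_split[of "\<lambda>x. x > 0" "Suc i" D] F by simp
    hence "map int k ! ?s = D!i" by (simp add: sS_def nth_append)
    hence xk: "D!i = int (k!?s)" using sn by simp
    have least: "(LEAST j. j < length cols \<and> cols ! j = []) = ?s"
    proof (rule Least_equality)
      show "?s < length cols \<and> cols ! ?s = []" using sn c lc by simp
      fix y assume "y < length cols \<and> cols ! y = []"
      thus "?s \<le> y" using b lc by (metis not_le)
    qed
    have fs: "fill_step k cols (i+1, D!i) = cols[?s := [i+1]]"
      unfolding fill_step_def using True least by (simp add: Let_def)
    have sumeq: "(\<Sum>j<Suc ?s. k!j+1 - length (cols[?s := [i+1]]!j)) = (\<Sum>j<?s. k!j+1 - length (cols!j)) + k!?s"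
      using lc sn by simp
    show ?thesis unfolding Inv_def fs sS1
    proof (intro conjI allI impI)
      show "length (cols[?s := [i + 1]]) = ?n" using lc by simp
    next
      fix j assume "j < ?n" "j < Suc ?s"
      thus "cols[?s := [i + 1]] ! j \<noteq> []" "length (cols[?s := [i + 1]] ! j) \<le> k ! j + 1"
        using b lc by (cases "j = ?s"; auto simp: nth_list_update)+
    next
      fix j assume "j < ?n" "Suc ?s \<le> j"
      thus "cols[?s := [i + 1]] ! j = []" using c lc by auto
    next
      show "int (\<Sum>j<Suc ?s. k ! j + 1 - length (cols[?s := [i + 1]] ! j)) = sum_list (take (Suc i) D)"
        using sumeq d tk xk by simp
    next
      show "(\<Sum>j<?n. mset (cols[?s := [i + 1]] ! j)) = mset [1..<Suc i + 1]"
        using upd[OF sn, of "[i+1]"] e c sn ms by simp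
    qed
  next
    case False
    hence xm: "D!i = -1" using A i by (meson nth_mem)
    have sS1: "sS D (Suc i) = ?s" using False tk by (simp add: sS_def)
    have pos: "sum_list (take i D) \<ge> 1"
    proof (cases "Suc i < length D")
      case True then show ?thesis using P tk xm by force
    next
      case False
      hence "take (Suc i) D = D" using i by simp
      moreover have "sum_list (take (Suc i) D) = sum_list (take i D) + D!i" using tk by simp
      ultimately show ?thesis using Dk_sum0[OF D] xm by simp
    qed
    have "\<exists>j<?s. 0 < k!j+1 - length (cols!j)"
    proof (rule ccontr)
      assume "\<not> ?thesis"
      hence "(\<Sum>j<?s. k!j+1 - length (cols!j)) = 0" by (intro sum.neutral) auto
      thus False using d pos by simp
    qed
    then obtain j0 where j0: "j0 < ?s" "length (cols!j0) < k!j0+1" by auto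
    have sn: "?s \<le> ?n" using sS_le[of D i] F by simp
    have "j0 \<in> active_cols k cols" unfolding active_cols_def using j0 b lc sn by auto
    define p where "p = (ARG_MIN (\<lambda>j. last (cols ! j)) j. j \<in> active_cols k cols)"
    have "p \<in> active_cols k cols" unfolding p_def
      by (rule arg_min_natI[of "\<lambda>j. j \<in> active_cols k cols"]) fact
    hence pa: "p < ?n" "cols!p \<noteq> []" "length (cols!p) < k!p+1" using lc by (auto simp: active_cols_def)
    have ps: "p < ?s" using pa c by (meson not_le)
    have fs: "fill_step k cols (i+1, D!i) = cols[p := cols!p @ [i+1]]"
      unfolding fill_step_def using False by (simp add: Let_def p_def)
    have sumeq: "(\<Sum>j<?s. k!j+1 - length (cols[p := cols!p @ [i+1]]!j)) + 1 = (\<Sum>j<?s. k!j+1 - length (cols!j))"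
    proof -
      have "(\<Sum>j<?s. k!j+1 - length (cols!j)) = (k!p+1 - length (cols!p)) + (\<Sum>j\<in>{..<?s}-{p}. k!j+1 - length (cols!j))"
        using ps by (meson finite_lessThan lessThan_iff sum.remove)
      moreover have "(\<Sum>j<?s. k!j+1 - length (cols[p := cols!p @ [i+1]]!j)) = (k!p+1 - length (cols[p := cols!p @ [i+1]]!p)) + (\<Sum>j\<in>{..<?s}-{p}. k!j+1 - length (cols[p := cols!p @ [i+1]]!j))"
        using ps by (meson finite_lessThan lessThan_iff sum.remove)
      moreover have "(\<Sum>j\<in>{..<?s}-{p}. k!j+1 - length (cols[p := cols!p @ [i+1]]!j)) = (\<Sum>j\<in>{..<?s}-{p}. k!j+1 - length (cols!j))"
        by (rule sum.cong) auto
      ultimately show ?thesis using pa lc by simp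
    qed
    show ?thesis unfolding Inv_def fs sS1
    proof (intro conjI allI impI)
      show "length (cols[p := cols!p @ [i+1]]) = ?n" using lc by simp
    next
      fix j assume "j < ?n" "j < ?s"
      thus "cols[p := cols!p @ [i+1]] ! j \<noteq> []" "length (cols[p := cols!p @ [i+1]] ! j) \<le> k ! j + 1"
        using b lc pa by (cases "j = p"; auto simp: nth_list_update)+
    next
      fix j assume "j < ?n" "?s \<le> j"
      thus "cols[p := cols!p @ [i+1]] ! j = []" using c lc ps by auto
    next
      show "int (\<Sum>j<?s. k ! j + 1 - length (cols[p := cols!p @ [i+1]] ! j)) = sum_list (take (Suc i) D)"
      proof -
        have h: "int (\<Sum>j<?s. k!j+1 - length (cols[p := cols!p @ [i+1]]!j)) + 1 = int (\<Sum>j<?s. k!j+1 - length (cols!j))"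
          using sumeq by linarith
        have "sum_list (take (Suc i) D) = sum_list (take i D) - 1" using tk xm by simp
        thus ?thesis using h d by linarith
      qed
    next
      have "mset (cols!p) \<subseteq># (\<Sum>j<?n. mset (cols!j))"
        using pa(1) by (metis finite_lessThan lessThan_iff mset_subset_eq_add_left sum.remove)
      thus "(\<Sum>j<?n. mset (cols[p := cols!p @ [i+1]] ! j)) = mset [1..<Suc i + 1]"
        using upd[OF pa(1), of "cols!p @ [i+1]"] e ms by simp
    qed
  qed
qed



lemma fold_inv:
  assumes D: "D \<in> Dk k"
  shows "i \<le> length D \<Longrightarrow> Inv k D i (foldl (fill_step k) (replicate (length k) []) (zip [1..<i+1] (take i D)))"
proof (induction i)
  case 0
  show ?case by (simp add: Inv_def sS_def)
next
  case (Suc i)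
  hence i: "i < length D" by simp
  have z: "zip [1..<Suc i+1] (take (Suc i) D) = zip [1..<i+1] (take i D) @ [(i+1, D!i)]"
    using i by (simp add: take_Suc_conv_app_nth)
  show ?case unfolding z using step_inv[OF D i] Suc by simp
qed

lemma final:
  assumes D: "D \<in> Dk k" and T: "T = fillT k D"
  shows "length T = length k" "\<And>j. j < length k \<Longrightarrow> length (T!j) = k!j+1"
    "(\<Sum>j<length k. mset (T!j)) = mset [1..<length D+1]"
proof -
  have I: "Inv k D (length D) T" using fold_inv[OF D, of "length D"] T by (simp add: fillT_def)
  have F: "filter (\<lambda>x. x > 0) D = map int k" using D by (simp add: Dk_def)
  have s: "sS D (length D) = length k" using F by (simp add: sS_def)
  have lc: "length T = length k" and b: "\<forall>j<length k. T!j \<noteq> [] \<and> length (T!j) \<le> k!j+1"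
    and d: "int (\<Sum>j<length k. k!j+1 - length (T!j)) = sum_list D"
    and e: "(\<Sum>j<length k. mset (T!j)) = mset [1..<length D+1]"
    using I s by (auto simp: Inv_def)
  have "(\<Sum>j<length k. k!j+1 - length (T!j)) = 0" using d Dk_sum0[OF D] by linarith
  hence z: "\<forall>j<length k. k!j+1 - length (T!j) = 0" by simp
  show "length T = length k" by fact
  show "\<And>j. j < length k \<Longrightarrow> length (T!j) = k!j+1" using z b by (meson diff_is_0_eq le_antisym)
  show "(\<Sum>j<length k. mset (T!j)) = mset [1..<length D+1]" by fact
qed

lemma colrow:
  assumes lc: "length T = n" and e: "(\<Sum>j<n. mset (T!j)) = mset [1..<N+1]"
    and j: "j < n" and r: "r < length (T!j)"
  shows "col_of T (T!j!r) = j" "row_of T (T!j!r) = r" "distinct (T!j)"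
proof -
  let ?x = "T!j!r"
  have cc: "\<forall>a. count (mset [1..<N+1]) a = (if a \<in> set [1..<N+1] then 1 else 0)"
    by (rule distinct_count_atmost_1[THEN iffD1, OF distinct_upt])
  have c1: "count (\<Sum>j<n. mset (T!j)) y \<le> 1" for y unfolding e using cc[rule_format, of y] by simp
  have dj: "distinct (T!j')" if "j' < n" for j'
  proof -
    have "count (mset (T!j')) y \<le> 1" for y
    proof -
      have "count (mset (T!j')) y \<le> (\<Sum>i<n. count (mset (T!i)) y)"
        using that by (intro member_le_sum) auto
      moreover have "count (\<Sum>j<n. mset (T!j)) y = (\<Sum>i<n. count (mset (T!i)) y)" by (rule count_sum)
      ultimately show ?thesis using c1[of y] by linarith
    qed
    hence "count (mset (T!j')) y = (if y \<in> set (T!j') then 1 else 0)" for y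
    proof -
      assume a: "\<And>y. count (mset (T!j')) y \<le> 1"
      have b: "(count (mset (T!j')) y = 0) = (y \<notin> set (T!j'))" by (rule count_mset_0_iff)
      show ?thesis
      proof (cases "y \<in> set (T!j')")
        case True
        then have "count (mset (T!j')) y \<noteq> 0" using b by blast
        then have "count (mset (T!j')) y = 1" using a[of y] by linarith
        thus ?thesis using True by simp
      next
        case False
        thus ?thesis using b by simp
      qed
    qed
    thus ?thesis unfolding distinct_count_atmost_1 by blast
  qed
  show "distinct (T!j)" using dj j .
  have uniq: "j' = j" if "j' < n" "?x \<in> set (T!j')" for j'
  proof (rule ccontr)
    assume ne: "j' \<noteq> j"
    have "(\<Sum>i\<in>{j,j'}. count (mset (T!i)) ?x) \<le> (\<Sum>i<n. count (mset (T!i)) ?x)"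
      using that j by (intro sum_mono2) auto
    moreover have "count (mset (T!j)) ?x \<ge> 1" using r by (simp add: Suc_le_eq)
    moreover have "count (mset (T!j')) ?x \<ge> 1" using that by (simp add: Suc_le_eq)
    moreover have "(\<Sum>i\<in>{j,j'}. count (mset (T!i)) ?x) = count (mset (T!j)) ?x + count (mset (T!j')) ?x"
      using ne by (simp del: count_mset_0_iff set_mset_mset)
    ultimately have "2 \<le> (\<Sum>i<n. count (mset (T!i)) ?x)" by linarith
    moreover have "count (\<Sum>j<n. mset (T!j)) ?x = (\<Sum>i<n. count (mset (T!i)) ?x)" by (rule count_sum)
    ultimately show False using c1[of ?x] by linarith
  qed
  show cj: "col_of T ?x = j" unfolding col_of_def
  proof (rule Least_equality)
    show "j < length T \<and> ?x \<in> set (T!j)" using j lc r by simp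
    fix y assume "y < length T \<and> ?x \<in> set (T!y)"
    thus "j \<le> y" using uniq lc by auto
  qed
  show "row_of T ?x = r" unfolding row_of_def cj
  proof (rule Least_equality)
    show "r < length (T!j) \<and> T!j!r = ?x" using r by simp
    fix y assume "y < length (T!j) \<and> T!j!y = ?x"
    thus "r \<le> y" using dj[OF j] r nth_eq_iff_index_eq by auto
  qed
qed

lemma shift_upt: "map (\<lambda>r. a + r - 1) [1..<Suc k] = [a..<a+k]"
  by (induction k) auto

lemma shift0: "map (\<lambda>r. a + r) [0..<Suc k] = [a..<Suc (a+k)]"
  by (induction k) auto

lemma col_mset: "mset (map (\<lambda>r. if r = 0 then a + k else a + r - 1) [0..<Suc k]) =
   mset (map (\<lambda>r. a + r) [0..<Suc k])"
proof -
  have "map (\<lambda>r. if r = 0 then a + k else a + r - 1) [0..<Suc k] = (a+k) # map (\<lambda>r. a + r - 1) [1..<Suc k]"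
    by (simp add: upt_conv_Cons del: upt_Suc)
  also have "\<dots> = (a+k) # [a..<a+k]" by (simp only: shift_upt)
  finally have 1: "mset (map (\<lambda>r. if r = 0 then a + k else a + r - 1) [0..<Suc k]) = mset [a..<Suc (a+k)]"
    by simp
  have "map (\<lambda>r. a + r) [0..<Suc k] = [a..<Suc (a+k)]" by (rule shift0)
  thus ?thesis using 1 by simp
qed

lemma image_sum: "image_mset h (\<Sum>j<(n::nat). M j) = (\<Sum>j<n. image_mset h (M j))"
  by (induction n) auto



lemma map_nth': "map h xs = map (\<lambda>r. h (xs!r)) [0..<length xs]"
proof -
  have "map h (map (\<lambda>i. xs!i) [0..<length xs]) = map h xs" by (simp only: map_nth)
  thus ?thesis unfolding map_map comp_def by (rule sym)
qed

theorem mainTheorem9: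
  fixes k :: "nat list" and D :: "int list"
  assumes "length k \<ge> 1"
    and "\<forall>x\<in>set k. x > 0"
    and "D \<in> Dk k"
  shows "\<forall>a\<in>GR_vertices k D.
           in_deg (GR_edges k D) a = out_deg (GR_edges k D) a
         \<and> out_deg (GR_edges k D) a = card (S_rank k D a)"
proof -
  define T where "T = fillT k D"
  define n where "n = length k"
  define N where "N = length D"
  define st where "st = starts T (length k - 1)"
  define E where "E = GR_edges k D"
  have lc: "length T = n" and lj: "\<And>j. j < n \<Longrightarrow> length (T!j) = k!j+1"
    and e: "(\<Sum>j<n. mset (T!j)) = mset [1..<N+1]"
    using final[OF assms(3) T_def] by (auto simp: n_def N_def)
  have rk: "rankR k D x = st ! col_of T x + row_of T x" for x
    by (simp add: rankR_def rank_in_def T_def st_def Let_def)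
  have fstE: "fst (GR_edge k D x) = rankR k D x" for x
    by (simp add: GR_edge_def Let_def)
  have colsum: "image_mset h (mset [1..<N+1]) = (\<Sum>j<n. mset (map h (T!j)))" for h
    unfolding e[symmetric] image_sum by simp
  have percol: "mset (map (\<lambda>x. snd (GR_edge k D x)) (T!j)) = mset (map (\<lambda>x. fst (GR_edge k D x)) (T!j))"
    if j: "j < n" for j
  proof -
    have nth: "map h (T!j) = map (\<lambda>r. h (T!j!r)) [0..<Suc (k!j)]" for h :: "nat \<Rightarrow> nat"
      using lj[OF j] map_nth'[of h "T!j"] by simp
    have cr: "col_of T (T!j!r) = j" "row_of T (T!j!r) = r" if "r < Suc (k!j)" for r
      using colrow[OF lc e j] that lj[OF j] by auto
    have 1: "map (\<lambda>r. snd (GR_edge k D (T!j!r))) [0..<Suc (k!j)] =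
             map (\<lambda>r. if r = 0 then st!j + k!j else st!j + r - 1) [0..<Suc (k!j)]"
      by (rule map_cong) (auto simp: GR_edge_def Let_def rk cr T_def[symmetric])
    have 2: "map (\<lambda>r. fst (GR_edge k D (T!j!r))) [0..<Suc (k!j)] =
             map (\<lambda>r. st!j + r) [0..<Suc (k!j)]"
      by (rule map_cong) (auto simp: fstE rk cr)
    have "mset (map (\<lambda>x. snd (GR_edge k D x)) (T!j)) = mset (map (\<lambda>r. snd (GR_edge k D (T!j!r))) [0..<Suc (k!j)])"
      by (simp only: nth)
    also have "\<dots> = mset (map (\<lambda>r. st!j + r) [0..<Suc (k!j)])" by (simp only: 1 col_mset)
    also have "\<dots> = mset (map (\<lambda>r. fst (GR_edge k D (T!j!r))) [0..<Suc (k!j)])" by (simp only: 2)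
    also have "\<dots> = mset (map (\<lambda>x. fst (GR_edge k D x)) (T!j))" by (simp only: nth)
    finally show ?thesis .
  qed
  have EE: "image_mset snd E = image_mset fst E"
  proof -
    have "image_mset snd E = image_mset (\<lambda>x. snd (GR_edge k D x)) (mset [1..<N+1])"
      by (simp add: E_def GR_edges_def N_def image_mset.compositionality comp_def)
    also have "\<dots> = image_mset (\<lambda>x. fst (GR_edge k D x)) (mset [1..<N+1])"
      unfolding colsum using percol by (intro sum.cong) auto
    also have "\<dots> = image_mset fst E"
      by (simp add: E_def GR_edges_def N_def image_mset.compositionality comp_def)
    finally show ?thesis .
  qed
  have sz: "size (filter_mset (\<lambda>e. g e = a) M) = size (filter_mset (\<lambda>y. y = a) (image_mset g M))"
    for g :: "nat \<times> nat \<Rightarrow> nat" and M a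
    by (simp add: filter_mset_image_mset)
  show ?thesis
  proof (intro ballI conjI)
    fix a
    show "in_deg (GR_edges k D) a = out_deg (GR_edges k D) a"
      unfolding in_deg_def out_deg_def E_def[symmetric] sz[of snd] sz[of fst] EE ..
    have "out_deg (GR_edges k D) a = length (filter (\<lambda>x. rankR k D x = a) [1..<N+1])"
    proof -
      have m: "image_mset fst (GR_edges k D) = mset (map (rankR k D) [1..<N+1])"
      proof -
        have "image_mset fst (GR_edges k D) = mset (map fst (map (GR_edge k D) [1..<N+1]))"
          unfolding GR_edges_def N_def by (simp only: mset_map)
        also have "\<dots> = mset (map (rankR k D) [1..<N+1])"
          by (simp only: map_map comp_def fstE)
        finally show ?thesis .
      qed
      have "out_deg (GR_edges k D) a = size (filter_mset (\<lambda>y. y = a) (mset (map (rankR k D) [1..<N+1])))"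
        unfolding out_deg_def sz[of fst] m ..
      also have "\<dots> = length (filter (\<lambda>y. y = a) (map (rankR k D) [1..<N+1]))"
        by (simp only: mset_filter[symmetric] size_mset)
      also have "\<dots> = length (filter (\<lambda>x. rankR k D x = a) [1..<N+1])"
        by (simp only: filter_map length_map comp_def)
      finally show ?thesis .
    qed
    also have "\<dots> = card (set (filter (\<lambda>x. rankR k D x = a) [1..<N+1]))"
      by (rule distinct_card[symmetric], rule distinct_filter, rule distinct_upt)
    also have "set (filter (\<lambda>x. rankR k D x = a) [1..<N+1]) = S_rank k D a"
      by (auto simp: S_rank_def N_def)
    finally show "out_deg (GR_edges k D) a = card (S_rank k D a)" .
  qed
qed


end
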